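(* For all integers $n$ and $\alpha$ with $n<\alpha\le 2^{n-2}+2$, there exists a minimal $n$-state nondeterministic finite automaton accepting an infix-free language whose equivalent minimal deterministic finite automaton has exactly $\alpha$ states.
   Context: NFAs have a single initial state and a transition function $\delta:Q\times\Sigma\to 2^Q$ that may map to the empty set (no sink state is needed or counted); DFAs are complete, so a sink state is counted. A minimal $n$-state NFA is an NFA with $n$ states such that no NFA with fewer states accepts the same language. A language $L\subseteq\Sigma^*$ is infix-free if $y\in L$ implies $xyz\notin L$ for all $x,z\in\Sigma^*$ with $xz\neq\lambda$ ($\lambda$ the empty word). *)

theory Defs
  imports Complex_Main
begin

record 'a nfa =
  nstates :: "nat set"
  ninit   :: nat
  nfinal  :: "nat set"
  ndelta  :: "nat \<Rightarrow> 'a \<Rightarrow> nat set"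

definition wf_nfa :: "'a set \<Rightarrow> 'a nfa \<Rightarrow> bool" where
  "wf_nfa \<Sigma> N \<longleftrightarrow> finite (nstates N) \<and> ninit N \<in> nstates N \<and> nfinal N \<subseteq> nstates N
     \<and> (\<forall>q\<in>nstates N. \<forall>a\<in>\<Sigma>. ndelta N q a \<subseteq> nstates N)"

fun nreach :: "'a nfa \<Rightarrow> nat set \<Rightarrow> 'a list \<Rightarrow> nat set" where
  "nreach N S [] = S"
| "nreach N S (a # w) = nreach N (\<Union>q\<in>S. ndelta N q a) w"

definition nfa_lang :: "'a set \<Rightarrow> 'a nfa \<Rightarrow> 'a list set" where
  "nfa_lang \<Sigma> N = {w \<in> lists \<Sigma>. nreach N {ninit N} w \<inter> nfinal N \<noteq> {}}"

definition minimal_nfa :: "'a set \<Rightarrow> 'a nfa \<Rightarrow> bool" where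
  "minimal_nfa \<Sigma> N \<longleftrightarrow> wf_nfa \<Sigma> N \<and>
     (\<forall>N'. wf_nfa \<Sigma> N' \<and> nfa_lang \<Sigma> N' = nfa_lang \<Sigma> N \<longrightarrow> card (nstates N) \<le> card (nstates N'))"

record 'a dfa =
  dstates :: "nat set"
  dinit   :: nat
  dfinal  :: "nat set"
  ddelta  :: "nat \<Rightarrow> 'a \<Rightarrow> nat"

text \<open>DFAs are complete (a sink state, if needed, is counted).\<close>
definition wf_dfa :: "'a set \<Rightarrow> 'a dfa \<Rightarrow> bool" where
  "wf_dfa \<Sigma> D \<longleftrightarrow> finite (dstates D) \<and> dinit D \<in> dstates D \<and> dfinal D \<subseteq> dstates D
     \<and> (\<forall>q\<in>dstates D. \<forall>a\<in>\<Sigma>. ddelta D q a \<in> dstates D)"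

fun dreach :: "'a dfa \<Rightarrow> nat \<Rightarrow> 'a list \<Rightarrow> nat" where
  "dreach D q [] = q"
| "dreach D q (a # w) = dreach D (ddelta D q a) w"

definition dfa_lang :: "'a set \<Rightarrow> 'a dfa \<Rightarrow> 'a list set" where
  "dfa_lang \<Sigma> D = {w \<in> lists \<Sigma>. dreach D (dinit D) w \<in> dfinal D}"

definition min_dfa_states :: "'a set \<Rightarrow> 'a list set \<Rightarrow> nat" where
  "min_dfa_states \<Sigma> L = (LEAST k. \<exists>D. wf_dfa \<Sigma> D \<and> dfa_lang \<Sigma> D = L \<and> card (dstates D) = k)"

definition infix_free :: "'a list set \<Rightarrow> bool" where
  "infix_free L \<longleftrightarrow> (\<forall>x y z. y \<in> L \<and> x @ y @ z \<in> L \<longrightarrow> x @ z = [])"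

end

theory Submission
  imports Defs
begin


lemma nreach_append: "nreach N S (x @ y) = nreach N (nreach N S x) y"
  by (induction x arbitrary: S) auto

lemma nreach_Un: "nreach N S w = (\<Union>q\<in>S. nreach N {q} w)"
proof (induction w arbitrary: S)
  case Nil then show ?case by auto
next
  case (Cons a w)
  have "nreach N S (a # w) = nreach N (\<Union>q\<in>S. ndelta N q a) w"
    by simp
  also have "\<dots> = (\<Union>p\<in>(\<Union>q\<in>S. ndelta N q a). nreach N {p} w)"
    by (rule Cons.IH)
  also have "\<dots> = (\<Union>q\<in>S. (\<Union>p\<in>ndelta N q a. nreach N {p} w))"
    by (rule UN_UN_flatten)
  also have "\<dots> = (\<Union>q\<in>S. nreach N (ndelta N q a) w)"
    by (intro SUP_cong refl) (rule Cons.IH[symmetric])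
  also have "\<dots> = (\<Union>q\<in>S. nreach N {q} (a # w))"
    by simp
  finally show ?case .
qed

lemma nreach_empty[simp]: "nreach N {} w = {}"
  by (induction w) auto

lemma nreach_mono: "q \<in> S \<Longrightarrow> nreach N {q} w \<subseteq> nreach N S w"
  using nreach_Un[of N S w] by auto

lemma nreach_states:
  "wf_nfa \<Sigma> N \<Longrightarrow> S \<subseteq> nstates N \<Longrightarrow> w \<in> lists \<Sigma> \<Longrightarrow> nreach N S w \<subseteq> nstates N"
proof (induction w arbitrary: S)
  case Nil then show ?case by auto
next
  case (Cons a w)
  have "a \<in> \<Sigma>" using Cons.prems(3) by simp
  then have "\<forall>q\<in>S. ndelta N q a \<subseteq> nstates N"
    using Cons.prems(1,2) unfolding wf_nfa_def by (meson subsetD)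
  then have "(\<Union>q\<in>S. ndelta N q a) \<subseteq> nstates N" by (simp add: UN_subset_iff)
  then show ?case using Cons by simp
qed

lemma fooling:
  assumes wf: "wf_nfa \<Sigma> N" and fin: "finite I"
    and xy: "\<forall>i\<in>I. x i \<in> lists \<Sigma> \<and> y i \<in> lists \<Sigma> \<and> x i @ y i \<in> nfa_lang \<Sigma> N"
    and ne: "\<forall>i\<in>I. \<forall>j\<in>I. i \<noteq> j \<longrightarrow> x i @ y j \<notin> nfa_lang \<Sigma> N \<or> x j @ y i \<notin> nfa_lang \<Sigma> N"
  shows "card I \<le> card (nstates N)"
proof -
  have ex: "\<forall>i\<in>I. \<exists>q. q \<in> nreach N {ninit N} (x i) \<and> nreach N {q} (y i) \<inter> nfinal N \<noteq> {}"
  proof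
    fix i assume i: "i \<in> I"
    then have "nreach N (nreach N {ninit N} (x i)) (y i) \<inter> nfinal N \<noteq> {}"
      using xy unfolding nfa_lang_def by (auto simp: nreach_append)
    then show "\<exists>q. q \<in> nreach N {ninit N} (x i) \<and> nreach N {q} (y i) \<inter> nfinal N \<noteq> {}"
      using nreach_Un[of N "nreach N {ninit N} (x i)" "y i"] by auto
  qed
  then obtain qf where qf: "\<forall>i\<in>I. qf i \<in> nreach N {ninit N} (x i) \<and> nreach N {qf i} (y i) \<inter> nfinal N \<noteq> {}"
    by metis
  have acc: "x i @ y j \<in> nfa_lang \<Sigma> N" if "i \<in> I" "j \<in> I" "qf i = qf j" for i j
  proof -
    have "nreach N {qf j} (y j) \<subseteq> nreach N (nreach N {ninit N} (x i)) (y j)"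
      using qf that by (intro nreach_mono) auto
    moreover have "nreach N {qf j} (y j) \<inter> nfinal N \<noteq> {}" using qf that by auto
    ultimately have "nreach N (nreach N {ninit N} (x i)) (y j) \<inter> nfinal N \<noteq> {}" by blast
    then show ?thesis using that xy unfolding nfa_lang_def
      by (auto simp: nreach_append)
  qed
  have "inj_on qf I"
    using ne acc by (metis inj_onI)
  moreover have "qf ` I \<subseteq> nstates N"
  proof
    fix q assume "q \<in> qf ` I"
    then obtain i where "i \<in> I" "q = qf i" by auto
    moreover have "nreach N {ninit N} (x i) \<subseteq> nstates N"
      using nreach_states[OF wf, of "{ninit N}" "x i"] wf xy \<open>i \<in> I\<close> unfolding wf_nfa_def by auto
    ultimately show "q \<in> nstates N" using qf by auto
  qed
  moreover have "finite (nstates N)" using wf unfolding wf_nfa_def by auto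
  ultimately show ?thesis by (rule card_inj_on_le)
qed

definition quot :: "'a list set \<Rightarrow> 'a list \<Rightarrow> 'a list set" where
  "quot L w = {z. w @ z \<in> L}"

lemma dreach_append: "dreach D q (x @ y) = dreach D (dreach D q x) y"
  by (induction x arbitrary: q) auto

lemma dreach_states:
  "wf_dfa \<Sigma> D \<Longrightarrow> q \<in> dstates D \<Longrightarrow> w \<in> lists \<Sigma> \<Longrightarrow> dreach D q w \<in> dstates D"
  by (induction w arbitrary: q) (auto simp: wf_dfa_def)

lemma dfa_lower:
  assumes wf: "wf_dfa \<Sigma> D" and L: "dfa_lang \<Sigma> D = L"
  shows "card (quot L ` lists \<Sigma>) \<le> card (dstates D)"
proof -
  define Ld where "Ld q = {z \<in> lists \<Sigma>. dreach D q z \<in> dfinal D}" for q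
  have "quot L ` lists \<Sigma> \<subseteq> Ld ` dstates D"
  proof
    fix P assume "P \<in> quot L ` lists \<Sigma>"
    then obtain w where w: "w \<in> lists \<Sigma>" "P = quot L w" by auto
    have "P = Ld (dreach D (dinit D) w)"
      using w L unfolding quot_def Ld_def dfa_lang_def by (auto simp: dreach_append)
    moreover have "dreach D (dinit D) w \<in> dstates D"
      using dreach_states[OF wf _ w(1)] wf unfolding wf_dfa_def by auto
    ultimately show "P \<in> Ld ` dstates D" by auto
  qed
  moreover have "finite (dstates D)" using wf unfolding wf_dfa_def by auto
  ultimately show ?thesis
    by (meson card_image_le card_mono finite_imageI order_trans)
qed

lemma dfa_exists:
  assumes L: "L \<subseteq> lists \<Sigma>" and fin: "finite (quot L ` lists \<Sigma>)"
  shows "\<exists>D. wf_dfa \<Sigma> D \<and> dfa_lang \<Sigma> D = L \<and> card (dstates D) = card (quot L ` lists \<Sigma>)"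
proof -
  define Q where "Q = quot L ` lists \<Sigma>"
  define c where "c = card Q"
  obtain h where h: "bij_betw h {0..<c} Q"
    using ex_bij_betw_nat_finite[of Q] fin unfolding Q_def c_def by auto
  define hi where "hi = the_inv_into {0..<c} h"
  have hi: "hi P < c" "h (hi P) = P" if "P \<in> Q" for P
    using that h the_inv_into_into[of h "{0..<c}" P "{0..<c}"] f_the_inv_into_f_bij_betw[OF h]
    unfolding hi_def bij_betw_def by auto
  have hQ: "h i \<in> Q" if "i < c" for i using h that unfolding bij_betw_def by auto
  have derivQ: "{z. a # z \<in> P} \<in> Q" if "P \<in> Q" "a \<in> \<Sigma>" for P a
  proof -
    obtain w where w: "w \<in> lists \<Sigma>" "P = quot L w" using \<open>P \<in> Q\<close> unfolding Q_def by auto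
    have "{z. a # z \<in> P} = quot L (w @ [a])" using w unfolding quot_def by auto
    then show ?thesis using w that unfolding Q_def by auto
  qed
  define D where "D = \<lparr>dstates = {0..<c}, dinit = hi (quot L []),
      dfinal = {i \<in> {0..<c}. [] \<in> h i}, ddelta = (\<lambda>i a. hi {z. a # z \<in> h i})\<rparr>"
  have q0: "quot L [] \<in> Q" unfolding Q_def by auto
  have inv: "dreach D i w < c \<and> h (dreach D i w) = {z. w @ z \<in> h i}"
    if "i < c" "w \<in> lists \<Sigma>" for i w
    using that
  proof (induction w arbitrary: i)
    case Nil then show ?case by (simp add: D_def)
  next
    case (Cons a w)
    have P: "{z. a # z \<in> h i} \<in> Q" using derivQ hQ Cons.prems by auto
    have d: "ddelta D i a < c" "h (ddelta D i a) = {z. a # z \<in> h i}"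
      using hi[OF P] by (auto simp: D_def)
    show ?case using Cons.IH[OF d(1)] Cons.prems d(2) by simp
  qed
  have wf: "wf_dfa \<Sigma> D"
    unfolding wf_dfa_def using hi q0 derivQ hQ by (auto simp: D_def)
  have lang: "dfa_lang \<Sigma> D = L"
  proof -
    have "w \<in> dfa_lang \<Sigma> D \<longleftrightarrow> w \<in> L" for w
    proof (cases "w \<in> lists \<Sigma>")
      case True
      have i0: "dinit D < c" "h (dinit D) = quot L []" using hi[OF q0] by (auto simp: D_def)
      have "dreach D (dinit D) w \<in> dfinal D \<longleftrightarrow> [] \<in> h (dreach D (dinit D) w)"
        using inv[OF i0(1) True] by (auto simp: D_def)
      also have "\<dots> \<longleftrightarrow> w \<in> L" using inv[OF i0(1) True] i0(2) by (auto simp: quot_def)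
      finally show ?thesis using True unfolding dfa_lang_def by auto
    next
      case False then show ?thesis using L unfolding dfa_lang_def by auto
    qed
    then show ?thesis by auto
  qed
  have "card (dstates D) = card (quot L ` lists \<Sigma>)" by (simp add: D_def c_def Q_def)
  then show ?thesis using wf lang by (intro exI[of _ D]) simp
qed

lemma min_dfa_eq:
  assumes "L \<subseteq> lists \<Sigma>" "finite (quot L ` lists \<Sigma>)"
  shows "min_dfa_states \<Sigma> L = card (quot L ` lists \<Sigma>)"
proof -
  obtain D where D: "wf_dfa \<Sigma> D" "dfa_lang \<Sigma> D = L" "card (dstates D) = card (quot L ` lists \<Sigma>)"
    using dfa_exists[OF assms] by blast
  show ?thesis
    unfolding min_dfa_states_def
  proof (rule Least_equality)
    show "\<exists>D. wf_dfa \<Sigma> D \<and> dfa_lang \<Sigma> D = L \<and> card (dstates D) = card (quot L ` lists \<Sigma>)"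
      using D by blast
  next
    fix y assume "\<exists>D. wf_dfa \<Sigma> D \<and> dfa_lang \<Sigma> D = L \<and> card (dstates D) = y"
    then obtain D' where "wf_dfa \<Sigma> D'" "dfa_lang \<Sigma> D' = L" "card (dstates D') = y" by blast
    then show "card (quot L ` lists \<Sigma>) \<le> y" using dfa_lower by blast
  qed
qed

lemma nfa_quot:
  assumes "w \<in> lists \<Sigma>"
  shows "quot (nfa_lang \<Sigma> N) w = {z \<in> lists \<Sigma>. nreach N (nreach N {ninit N} w) z \<inter> nfinal N \<noteq> {}}"
  using assms unfolding quot_def nfa_lang_def by (auto simp: nreach_append)

lemma nfa_lang_sub: "nfa_lang \<Sigma> N \<subseteq> lists \<Sigma>"
  unfolding nfa_lang_def by auto



locale constr =
  fixes m k :: nat and g :: "nat \<Rightarrow> nat set"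
  assumes m1: "1 \<le> m"
  and gsub: "\<And>j. j < k \<Longrightarrow> g j \<subseteq> {1..m}"
  and gne: "\<And>j. j < k \<Longrightarrow> g j \<noteq> {}"
  and gsing: "\<And>i. i \<in> {1..m} \<Longrightarrow> \<exists>j<k. g j = {i}"
  and ginj: "inj_on g {0..<k}"
begin

definition Sig :: "nat set" where "Sig = {0..m+k}"

definition dl :: "nat \<Rightarrow> nat \<Rightarrow> nat set" where
 "dl q c = (if q = 0 then (if c = 0 then {1} else {})
   else if q \<le> m then
     (if c = 0 then (if q = 1 then {Suc m} else {})
      else if c \<le> m then (if c = q then {1} else {})
      else if q = 1 \<and> c - Suc m < k then g (c - Suc m) else {})
   else {})"

definition NN :: "nat nfa" where
  "NN = \<lparr>nstates = {0..Suc m}, ninit = 0, nfinal = {Suc m}, ndelta = dl\<rparr>"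

definition Fam where "Fam = g ` {0..<k}"
definition Good where "Good = {{}, {0}, {Suc m}} \<union> Fam"
definition Lng where "Lng R = {z \<in> lists Sig. nreach NN R z \<inter> {Suc m} \<noteq> {}}"

lemma NN_simps[simp]: "nstates NN = {0..Suc m}" "ninit NN = 0" "nfinal NN = {Suc m}" "ndelta NN = dl"
  by (auto simp: NN_def)

lemma step_sub:
  assumes "S \<subseteq> {1..m}"
  shows "(\<Union>q\<in>S. dl q a) = (if a = 0 then (if 1 \<in> S then {Suc m} else {})
     else if a \<le> m then (if a \<in> S then {1} else {})
     else if 1 \<in> S \<and> a - Suc m < k then g (a - Suc m) else {})"
  using assms by (auto simp: dl_def subset_iff split: if_splits)

lemma gmem: "j < k \<Longrightarrow> x \<in> g j \<Longrightarrow> 1 \<le> x \<and> x \<le> m"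
  using gsub[of j] by auto

lemma Fam_sub: "S \<in> Fam \<Longrightarrow> S \<subseteq> {1..m}"
proof -
  assume "S \<in> Fam"
  then obtain j where "j < k" "S = g j" unfolding Fam_def by auto
  then show ?thesis using gsub by simp
qed

lemma one_Fam: "{1} \<in> Fam"
proof -
  obtain j where j: "j < k" "g j = {1}" using gsing[of 1] m1 by auto
  have "g j \<in> g ` {0..<k}" using j(1) by simp
  then show ?thesis using j(2) unfolding Fam_def by simp
qed

lemma step_Good:
  assumes "S \<in> Good" shows "(\<Union>q\<in>S. dl q a) \<in> Good"
proof -
  consider "S = {}" | "S = {0}" | "S = {Suc m}" | "S \<in> Fam" using assms unfolding Good_def by auto
  then show ?thesis
  proof cases
    case 1 then show ?thesis by (simp add: Good_def)
  next
    case 2 then show ?thesis using one_Fam by (cases "a = 0") (simp_all add: Good_def dl_def)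
  next
    case 3 then show ?thesis by (simp add: Good_def dl_def)
  next
    case 4
    have F: "a - Suc m < k \<Longrightarrow> g (a - Suc m) \<in> Fam" unfolding Fam_def by simp
    show ?thesis unfolding step_sub[OF Fam_sub[OF 4]] using one_Fam F by (simp add: Good_def)
  qed
qed

lemma reach_Good: "S \<in> Good \<Longrightarrow> nreach NN S w \<in> Good"
proof (induction w arbitrary: S)
  case Nil then show ?case by simp
next
  case (Cons a w)
  have "(\<Union>q\<in>S. dl q a) \<in> Good" by (rule step_Good[OF Cons.prems])
  then have "nreach NN (\<Union>q\<in>S. dl q a) w \<in> Good" by (rule Cons.IH)
  then show ?case by simp
qed

lemma reach_eq: "(\<lambda>w. nreach NN {0} w) ` lists Sig = Good"
proof
  show "(\<lambda>w. nreach NN {0} w) ` lists Sig \<subseteq> Good"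
    by (intro image_subsetI reach_Good) (simp add: Good_def)
next
  show "Good \<subseteq> (\<lambda>w. nreach NN {0} w) ` lists Sig"
  proof
    fix R assume "R \<in> Good"
    then consider "R = {}" | "R = {0}" | "R = {Suc m}" | "R \<in> Fam" unfolding Good_def by auto
    then show "R \<in> (\<lambda>w. nreach NN {0} w) ` lists Sig"
    proof cases
      case 1
      have "nreach NN {0} [1] = {}" by (simp add: dl_def)
      moreover have "[1] \<in> lists Sig" using m1 by (simp add: Sig_def)
      ultimately show ?thesis using 1 by (intro image_eqI[where x="[1]"]) auto
    next
      case 2
      have "nreach NN {0} [] = {0}" by simp
      then show ?thesis using 2 by (intro image_eqI[where x="[]"]) auto
    next
      case 3
      have "nreach NN {0} [0,0] = {Suc m}" using m1 by (simp add: dl_def)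
      moreover have "[0,0] \<in> lists Sig" by (simp add: Sig_def)
      ultimately show ?thesis using 3 by (intro image_eqI[where x="[0,0]"]) auto
    next
      case 4
      then obtain j where j: "j < k" "R = g j" unfolding Fam_def by auto
      have "nreach NN {0} [0, Suc m + j] = g j" using m1 j by (simp add: dl_def)
      moreover have "[0, Suc m + j] \<in> lists Sig" using j by (simp add: Sig_def)
      ultimately show ?thesis using j by (intro image_eqI[where x="[0, Suc m + j]"]) auto
    qed
  qed
qed

lemma dlSm: "dl (Suc m) a = {}" by (simp add: dl_def)
lemma dl10: "dl (Suc 0) 0 = {Suc m}" using m1 by (simp add: dl_def)

definition dec where
  "dec A = (if [] \<in> A then {Suc m} else if [0,0] \<in> A then {0} else {i\<in>{1..m}. [i,0] \<in> A})"

lemma dec_Lng: assumes "R \<in> Good" shows "dec (Lng R) = R"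
proof -
  have s00: "[0,0] \<in> lists Sig" by (simp add: Sig_def)
  have si: "[i,0] \<in> lists Sig" if "i \<in> {1..m}" for i using that by (simp add: Sig_def)
  consider "R = {}" | "R = {0}" | "R = {Suc m}" | "R \<in> Fam" using assms unfolding Good_def by auto
  then show ?thesis
  proof cases
    case 1 then show ?thesis by (auto simp: dec_def Lng_def)
  next
    case 2 then show ?thesis using s00 m1 by (auto simp: dec_def Lng_def dl_def)
  next
    case 3 then show ?thesis by (auto simp: dec_def Lng_def)
  next
    case 4
    have S: "R \<subseteq> {1..m}" using Fam_sub[OF 4] .
    have e: "[] \<notin> Lng R" using S by (auto simp: Lng_def)
    have z: "[0,0] \<notin> Lng R"
    proof -
      have "nreach NN R [0,0] = {}"
        using step_sub[OF S, of 0] by (simp add: dlSm)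
      then show ?thesis by (simp add: Lng_def)
    qed
    have i: "[i,0] \<in> Lng R \<longleftrightarrow> i \<in> R" if "i \<in> {1..m}" for i
    proof -
      have "nreach NN R [i,0] = (if i \<in> R then {Suc m} else {})"
        using step_sub[OF S, of i] that by (simp add: dl10)
      then show ?thesis using si[OF that] by (simp add: Lng_def)
    qed
    have "{i\<in>{1..m}. [i,0] \<in> Lng R} = R" using i S by blast
    then show ?thesis using e z by (simp add: dec_def)
  qed
qed

lemma Lng_inj: "inj_on Lng Good"
  by (rule inj_on_inverseI[where g = dec]) (rule dec_Lng)

lemma card_Good: "card Good = k + 3"
proof -
  have cF: "card Fam = k" using ginj unfolding Fam_def by (simp add: card_image)
  have fF: "finite Fam" unfolding Fam_def by simp
  have n1: "{} \<notin> Fam"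
  proof
    assume "{} \<in> Fam"
    then obtain j where "j < k" "{} = g j" unfolding Fam_def by auto
    then show False using gne by metis
  qed
  have n2: "{0} \<notin> Fam" using Fam_sub by fastforce
  have n3: "{Suc m} \<notin> Fam" using Fam_sub by fastforce
  have "Good = insert {} (insert {0} (insert {Suc m} Fam))" unfolding Good_def by auto
  then show ?thesis using cF fF n1 n2 n3 by simp
qed

lemma quot_eq: "quot (nfa_lang Sig NN) ` lists Sig = Lng ` Good"
proof -
  have "quot (nfa_lang Sig NN) w = Lng (nreach NN {0} w)" if "w \<in> lists Sig" for w
    using nfa_quot[OF that, of NN] by (simp add: Lng_def)
  then have "quot (nfa_lang Sig NN) ` lists Sig = Lng ` ((\<lambda>w. nreach NN {0} w) ` lists Sig)"
    by (auto simp: image_iff)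
  then show ?thesis using reach_eq by simp
qed

lemma min_dfa: "min_dfa_states Sig (nfa_lang Sig NN) = k + 3"
proof -
  have fin: "finite Good" unfolding Good_def Fam_def by simp
  have "min_dfa_states Sig (nfa_lang Sig NN) = card (Lng ` Good)"
    using min_dfa_eq[OF nfa_lang_sub, of Sig NN] quot_eq fin by simp
  also have "\<dots> = k + 3" using card_image[OF Lng_inj] card_Good by simp
  finally show ?thesis .
qed

lemma dl_sub: "dl q a \<subseteq> {0..Suc m}"
proof
  fix x assume x: "x \<in> dl q a"
  show "x \<in> {0..Suc m}"
  proof (cases "q \<noteq> 0 \<and> q \<le> m \<and> a \<noteq> 0 \<and> \<not> a \<le> m")
    case True
    then have "a - Suc m < k" "x \<in> g (a - Suc m)" using x by (auto simp: dl_def split: if_splits)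
    from gmem[OF this] show ?thesis by simp
  next
    case False
    then show ?thesis using x by (auto simp: dl_def split: if_splits)
  qed
qed

lemma wf: "wf_nfa Sig NN"
  unfolding wf_nfa_def using dl_sub by simp

lemma card_states: "card (nstates NN) = m + 2"
  by simp

end


definition zc :: "nat list \<Rightarrow> nat" where "zc w = length (filter (\<lambda>c. c = 0) w)"

lemma zc_simps[simp]: "zc [] = 0" "zc (a # w) = (if a = 0 then Suc (zc w) else zc w)"
  "zc (x @ y) = zc x + zc y"
  by (auto simp: zc_def)

lemma zc0: "zc w = 0 \<Longrightarrow> 0 \<notin> set w"
  by (induction w) (auto split: if_splits)

context constr begin

lemma shape:
  "Suc m \<in> nreach NN {q} w \<Longrightarrow>
     (q = Suc m \<and> w = []) \<or> (q \<in> {1..m} \<and> zc w = 1 \<and> w \<noteq> [] \<and> last w = 0)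
     \<or> (q = 0 \<and> zc w = 2 \<and> w \<noteq> [] \<and> hd w = 0 \<and> last w = 0)"
proof (induction w arbitrary: q)
  case Nil then show ?case by simp
next
  case (Cons a w)
  have "Suc m \<in> nreach NN (dl q a) w" using Cons.prems by simp
  then obtain p where p: "p \<in> dl q a" "Suc m \<in> nreach NN {p} w"
    using nreach_Un[of NN "dl q a" w] by auto
  note IH = Cons.IH[OF p(2)]
  consider "q = 0" | "q \<in> {1..m}" | "q > m" by force
  then show ?case
  proof cases
    case 1
    then have "a = 0" "p = 1" using p(1) by (auto simp: dl_def split: if_splits)
    then show ?thesis using IH 1 m1 by auto
  next
    case 2
    show ?thesis
    proof (cases "a = 0")
      case True
      then have "p = Suc m" using p(1) 2 by (auto simp: dl_def split: if_splits)
      then have "w = []" using IH m1 by auto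
      then show ?thesis using 2 True by simp
    next
      case False
      then have "p \<in> {1..m}" using p(1) 2 m1 by (auto simp: dl_def split: if_splits dest: gmem)
      then have "zc w = 1 \<and> w \<noteq> [] \<and> last w = 0" using IH by auto
      then show ?thesis using 2 False by simp
    qed
  next
    case 3
    then have False using p(1) by (auto simp: dl_def split: if_splits)
    then show ?thesis ..
  qed
qed

lemma lang_shape:
  assumes "w \<in> nfa_lang Sig NN"
  shows "zc w = 2 \<and> w \<noteq> [] \<and> hd w = 0 \<and> last w = 0"
proof -
  have "Suc m \<in> nreach NN {0} w" using assms unfolding nfa_lang_def by auto
  from shape[OF this] show ?thesis by auto
qed

lemma infixfree: "infix_free (nfa_lang Sig NN)"
  unfolding infix_free_def
proof (intro allI impI)
  fix x y z assume a: "y \<in> nfa_lang Sig NN \<and> x @ y @ z \<in> nfa_lang Sig NN"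
  have hy: "zc y = 2" using lang_shape a by auto
  note xyz0 = lang_shape[OF conjunct2[OF a]]
  have xyz: "zc (x @ y @ z) = 2" "hd (x @ y @ z) = 0" "last (x @ y @ z) = 0" "x @ y @ z \<noteq> []"
    using xyz0 by blast+
  have "zc x = 0" "zc z = 0" using hy xyz(1) by auto
  then have nx: "0 \<notin> set x" and nz: "0 \<notin> set z" using zc0 by auto
  have "x = []"
  proof (rule ccontr)
    assume "x \<noteq> []"
    then have "hd (x @ y @ z) = hd x" by simp
    then show False using xyz(2) nx \<open>x \<noteq> []\<close> hd_in_set by metis
  qed
  moreover have "z = []"
  proof (rule ccontr)
    assume "z \<noteq> []"
    then have "last (x @ y @ z) = last z" by simp
    then show False using xyz(3) nz \<open>z \<noteq> []\<close> last_in_set by metis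
  qed
  ultimately show "x @ z = []" by simp
qed

definition cj where "cj i = (SOME j. j < k \<and> g j = {i})"

lemma cj: "i \<in> {1..m} \<Longrightarrow> cj i < k \<and> g (cj i) = {i}"
  unfolding cj_def using gsing[of i] by (rule someI_ex) (use gsing in auto)

definition xs where "xs i = (if i = 0 then [] else if i = Suc m then [0,0] else [0, Suc m + cj i])"
definition ys where "ys i = (if i = 0 then [0,0] else if i = Suc m then [] else [i, 0])"

lemma fool_in: "i \<in> {0..Suc m} \<Longrightarrow> xs i \<in> lists Sig \<and> ys i \<in> lists Sig \<and> xs i @ ys i \<in> nfa_lang Sig NN"
proof -
  assume i: "i \<in> {0..Suc m}"
  have l00: "[0,0] \<in> nfa_lang Sig NN" using m1 by (simp add: nfa_lang_def Sig_def dl_def)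
  consider "i = 0" | "i = Suc m" | "i \<in> {1..m}" using i by force
  then show ?thesis
  proof cases
    case 1 then show ?thesis using l00 by (simp add: xs_def ys_def Sig_def)
  next
    case 2 then show ?thesis using l00 by (simp add: xs_def ys_def Sig_def)
  next
    case 3
    have c: "cj i < k" "g (cj i) = {i}" using cj[OF 3] by auto
    have "nreach NN {0} [0, Suc m + cj i, i, 0] = {Suc m}"
      using 3 c m1 by (simp add: dl_def)
    then show ?thesis using 3 c by (auto simp: xs_def ys_def Sig_def nfa_lang_def)
  qed
qed

lemma fool_out:
  assumes "i \<in> {0..Suc m}" "j \<in> {0..Suc m}" "i \<noteq> j"
  shows "xs i @ ys j \<notin> nfa_lang Sig NN"
proof
  assume a: "xs i @ ys j \<in> nfa_lang Sig NN"
  note sh = lang_shape[OF a]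
  consider "i = 0" | "i = Suc m" | "i \<in> {1..m}" using assms by force
  then show False
  proof cases
    case 1
    then show False using sh assms by (cases "j = Suc m") (auto simp: xs_def ys_def)
  next
    case 2
    then show False using sh assms by (cases "j = 0") (auto simp: xs_def ys_def)
  next
    case 3
    have c: "cj i < k" "g (cj i) = {i}" using cj[OF 3] by auto
    consider "j = 0" | "j = Suc m" | "j \<in> {1..m}" using assms by force
    then show False
    proof cases
      case 1 then show False using sh 3 by (auto simp: xs_def ys_def)
    next
      case 2 then show False using sh 3 by (auto simp: xs_def ys_def)
    next
      case j: 3
      have "nreach NN {0} [0, Suc m + cj i, j, 0] = {}"
        using 3 j c m1 assms(3) by (simp add: dl_def)
      then show False using a 3 j by (auto simp: xs_def ys_def nfa_lang_def)
    qed
  qed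
qed

lemma minimal: "minimal_nfa Sig NN"
  unfolding minimal_nfa_def
proof (intro conjI allI impI)
  show "wf_nfa Sig NN" by (rule wf)
  fix N' :: "nat nfa" assume a: "wf_nfa Sig N' \<and> nfa_lang Sig N' = nfa_lang Sig NN"
  have "card {0..Suc m} \<le> card (nstates N')"
    using fooling[of Sig N' "{0..Suc m}" xs ys] a fool_in fool_out by auto
  then show "card (nstates NN) \<le> card (nstates N')" by simp
qed

end


lemma exists_fam:
  assumes m1: "1 \<le> m" and mk: "m \<le> k" and k2: "k \<le> 2^m - 1"
  shows "\<exists>g. constr m k g"
proof -
  define NE where "NE = Pow {1..m} - {{}}"
  define Sg where "Sg = (\<lambda>i. {i}) ` {1..(m::nat)}"
  have fNE: "finite NE" unfolding NE_def by simp
  have cNE: "card NE = 2^m - 1"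
    unfolding NE_def by (simp add: card_Pow)
  have cSg: "card Sg = m" unfolding Sg_def by (simp add: card_image inj_on_def)
  have SgNE: "Sg \<subseteq> NE" unfolding Sg_def NE_def by auto
  have "card (NE - Sg) = 2^m - 1 - m" using cNE cSg SgNE fNE by (simp add: card_Diff_subset finite_subset)
  then have "k - m \<le> card (NE - Sg)" using k2 by simp
  then obtain E where E: "E \<subseteq> NE - Sg" "card E = k - m" "finite E"
    by (rule obtain_subset_with_card_n)
  define F where "F = Sg \<union> E"
  have fSg: "finite Sg" unfolding Sg_def by simp
  have cF: "card F = k" unfolding F_def
    using card_Un_disjoint[OF fSg E(3)] E cSg mk by auto
  obtain g where g: "bij_betw g {0..<k} F"
    using ex_bij_betw_nat_finite[of F] cF E(3) fSg unfolding F_def by auto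
  have FNE: "F \<subseteq> NE" unfolding F_def using SgNE E by auto
  have gF: "g j \<in> F" if "j < k" for j using g that unfolding bij_betw_def by auto
  show ?thesis
  proof (intro exI[of _ g] constr.intro)
    show "1 \<le> m" by fact
    show "g j \<subseteq> {1..m}" if "j < k" for j using gF[OF that] FNE unfolding NE_def by auto
    show "g j \<noteq> {}" if "j < k" for j using gF[OF that] FNE unfolding NE_def by auto
    show "\<exists>j<k. g j = {i}" if "i \<in> {1..m}" for i
    proof -
      have "{i} \<in> F" using that unfolding F_def Sg_def by auto
      then have "{i} \<in> g ` {0..<k}" using g unfolding bij_betw_def by simp
      then show ?thesis by auto
    qed
    show "inj_on g {0..<k}" using g unfolding bij_betw_def by simp
  qed
qed

lemma case_ge3:
  assumes "3 \<le> n" "n < \<alpha>" "\<alpha> \<le> 2^(n-2) + 2"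
  shows "\<exists>(\<Sigma>::nat set) (N::nat nfa). finite \<Sigma> \<and> \<Sigma> \<noteq> {} \<and>
           minimal_nfa \<Sigma> N \<and> card (nstates N) = n \<and>
           infix_free (nfa_lang \<Sigma> N) \<and>
           min_dfa_states \<Sigma> (nfa_lang \<Sigma> N) = \<alpha>"
proof -
  define m where "m = n - 2"
  define k where "k = \<alpha> - 3"
  have "1 \<le> m" "m \<le> k" "k \<le> 2^m - 1" using assms unfolding m_def k_def by auto
  then obtain g where "constr m k g" using exists_fam by blast
  then interpret c: constr m k g .
  have "finite c.Sig" "c.Sig \<noteq> {}" by (auto simp: c.Sig_def)
  moreover have "card (nstates c.NN) = n" using c.card_states assms unfolding m_def by simp
  moreover have "min_dfa_states c.Sig (nfa_lang c.Sig c.NN) = \<alpha>"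
    using c.min_dfa assms unfolding k_def by simp
  ultimately show ?thesis using c.minimal c.infixfree by blast
qed

definition N1 :: "nat nfa" where
  "N1 = \<lparr>nstates = {0}, ninit = 0, nfinal = {0}, ndelta = (\<lambda>q a. {})\<rparr>"

lemma N1_simps[simp]: "ninit N1 = 0" "nfinal N1 = {0}" "nstates N1 = {0}" by (auto simp: N1_def)

lemma N1_reach: "nreach N1 {0} w = (if w = [] then {0} else {})"
  by (cases w) (auto simp: N1_def)

lemma N1_lang: "nfa_lang {0} N1 = {[]}"
  unfolding nfa_lang_def by (auto simp: N1_reach)

lemma case1:
  "\<exists>(\<Sigma>::nat set) (N::nat nfa). finite \<Sigma> \<and> \<Sigma> \<noteq> {} \<and>
           minimal_nfa \<Sigma> N \<and> card (nstates N) = 1 \<and>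
           infix_free (nfa_lang \<Sigma> N) \<and>
           min_dfa_states \<Sigma> (nfa_lang \<Sigma> N) = 2"
proof (intro exI[of _ "{0}"] exI[of _ N1] conjI)
  show "minimal_nfa {0} N1"
    unfolding minimal_nfa_def
  proof (intro conjI allI impI)
    show "wf_nfa {0} N1" by (simp add: wf_nfa_def N1_def)
    fix N' :: "nat nfa" assume "wf_nfa {0} N' \<and> nfa_lang {0} N' = nfa_lang {0} N1"
    then have "finite (nstates N')" "ninit N' \<in> nstates N'" unfolding wf_nfa_def by auto
    then have "1 \<le> card (nstates N')" by (metis One_nat_def Suc_leI card_gt_0_iff empty_iff)
    then show "card (nstates N1) \<le> card (nstates N')" by (simp add: N1_def)
  qed
  show "infix_free (nfa_lang {0} N1)" unfolding N1_lang infix_free_def by auto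
  have q: "quot {[]} w = (if w = [] then {[]} else {})" for w :: "nat list"
    unfolding quot_def by auto
  have im: "quot {[]} ` lists {0::nat} = {{[]}, {}}"
  proof
    show "quot {[]} ` lists {0::nat} \<subseteq> {{[]}, {}}" using q by auto
    have "quot {[]} [] \<in> quot {[]} ` lists {0::nat}" "quot {[]} [0] \<in> quot {[]} ` lists {0::nat}"
      by (rule imageI, simp)+
    then show "{{[]}, {}} \<subseteq> quot {[]} ` lists {0::nat}" using q by simp
  qed
  show "min_dfa_states {0} (nfa_lang {0} N1) = 2"
    unfolding N1_lang using min_dfa_eq[of "{[]}" "{0::nat}"] im by simp
qed (auto simp: N1_def)

definition N2 :: "nat nfa" where
  "N2 = \<lparr>nstates = {0,1}, ninit = 0, nfinal = {1}, ndelta = (\<lambda>q a. if q = 0 then {1} else {})\<rparr>"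

lemma N2_reach1: "nreach N2 {1} w = (if w = [] then {1} else {})"
  by (cases w) (auto simp: N2_def)

lemma N2_reach: "nreach N2 {0} w = (if w = [] then {0} else if length w = 1 then {1} else {})"
proof (cases w)
  case Nil then show ?thesis by simp
next
  case (Cons a v)
  have "nreach N2 {0} w = nreach N2 {1} v" using Cons by (simp add: N2_def)
  then show ?thesis using Cons N2_reach1 by simp
qed

lemma N2_lang: "nfa_lang {0} N2 = {[0]}"
proof -
  have "w \<in> nfa_lang {0} N2 \<longleftrightarrow> w = [0]" for w
  proof
    assume "w \<in> nfa_lang {0} N2"
    then have "w \<in> lists {0}" "length w = 1"
      unfolding nfa_lang_def using N2_reach[of w] by (auto simp: N2_def split: if_splits)
    then show "w = [0]" by (cases w) auto
  qed (simp add: nfa_lang_def N2_reach N2_def)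
  then show ?thesis by auto
qed

lemma case2:
  "\<exists>(\<Sigma>::nat set) (N::nat nfa). finite \<Sigma> \<and> \<Sigma> \<noteq> {} \<and>
           minimal_nfa \<Sigma> N \<and> card (nstates N) = 2 \<and>
           infix_free (nfa_lang \<Sigma> N) \<and>
           min_dfa_states \<Sigma> (nfa_lang \<Sigma> N) = 3"
proof (intro exI[of _ "{0}"] exI[of _ N2] conjI)
  show "minimal_nfa {0} N2"
    unfolding minimal_nfa_def
  proof (intro conjI allI impI)
    show "wf_nfa {0} N2" by (simp add: wf_nfa_def N2_def)
    fix N' :: "nat nfa" assume a: "wf_nfa {0} N' \<and> nfa_lang {0} N' = nfa_lang {0} N2"
    define x where "x i = (if i = (0::nat) then [] else [0::nat])" for i
    define y where "y i = (if i = (0::nat) then [0::nat] else [])" for i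
    have L: "nfa_lang {0} N' = {[0]}" using a N2_lang by simp
    have h1: "\<forall>i\<in>{0::nat,1}. x i \<in> lists {0} \<and> y i \<in> lists {0} \<and> x i @ y i \<in> nfa_lang {0} N'"
      by (simp add: L x_def y_def)
    have h2: "\<forall>i\<in>{0::nat,1}. \<forall>j\<in>{0::nat,1}. i \<noteq> j \<longrightarrow> x i @ y j \<notin> nfa_lang {0} N' \<or> x j @ y i \<notin> nfa_lang {0} N'"
      by (simp add: L x_def y_def)
    have "card {0::nat,1} \<le> card (nstates N')"
      using fooling[OF conjunct1[OF a] _ h1 h2] by simp
    then show "card (nstates N2) \<le> card (nstates N')" by (simp add: N2_def)
  qed
  show "infix_free (nfa_lang {0} N2)" unfolding N2_lang infix_free_def
  proof (intro allI impI)
    fix x y z :: "nat list" assume h: "y \<in> {[0]} \<and> x @ y @ z \<in> {[0]}"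
    have y0: "y = [0]" and xyz: "x @ y @ z = [0]" using h by auto
    have "length (x @ y @ z) = length [0::nat]" by (simp only: xyz)
    then have "length x = 0" "length z = 0" using y0 by auto
    then show "x @ z = []" by simp
  qed
  have q: "quot {[0]} w = (if w = [] then {[0]} else if w = [0] then {[]} else {})" for w :: "nat list"
  proof (cases w)
    case Nil then show ?thesis by (simp add: quot_def)
  next
    case (Cons a v)
    then show ?thesis by (cases v) (auto simp: quot_def)
  qed
  have im: "quot {[0]} ` lists {0::nat} = {{[0]}, {[]}, {}}"
  proof
    show "quot {[0]} ` lists {0::nat} \<subseteq> {{[0]}, {[]}, {}}" using q by auto
    have "quot {[0]} [] \<in> quot {[0]} ` lists {0::nat}" "quot {[0]} [0] \<in> quot {[0]} ` lists {0::nat}"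
      "quot {[0]} [0,0] \<in> quot {[0]} ` lists {0::nat}"
      by (rule imageI, simp)+
    then show "{{[0]}, {[]}, {}} \<subseteq> quot {[0]} ` lists {0::nat}" using q by simp
  qed
  show "min_dfa_states {0} (nfa_lang {0} N2) = 3"
    unfolding N2_lang using min_dfa_eq[of "{[0]}" "{0::nat}"] im by simp
qed (auto simp: N2_def)

lemma pw1: "(2::real) powr (real (1::nat) - 2) = 1/2"
proof -
  have "(2::real) powr (real (1::nat) - 2) = 2 powr (-1)" by simp
  also have "\<dots> = inverse (2 powr 1)" by (rule powr_minus)
  also have "\<dots> = 1/2" by simp
  finally show ?thesis .
qed

lemma pw2: "(2::real) powr (real (2::nat) - 2) = 1"
proof -
  have e: "real (2::nat) - 2 = (0::real)" by simp
  show ?thesis unfolding e by simp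
qed

lemma pw3: "3 \<le> n \<Longrightarrow> (2::real) powr (real n - 2) = 2 ^ (n - 2)"
proof -
  assume a: "3 \<le> n"
  have e: "real n - 2 = real (n - 2)" using a by simp
  have "(2::real) powr real (n - 2) = 2 ^ (n - 2)" by (rule powr_realpow) simp
  then show "(2::real) powr (real n - 2) = 2 ^ (n - 2)" unfolding e .
qed

theorem mainTheorem6:
  fixes n \<alpha> :: nat
  assumes "1 \<le> n" and "n < \<alpha>" and "real \<alpha> \<le> 2 powr (real n - 2) + 2"
  shows "\<exists>(\<Sigma>::nat set) (N::nat nfa). finite \<Sigma> \<and> \<Sigma> \<noteq> {} \<and>
           minimal_nfa \<Sigma> N \<and> card (nstates N) = n \<and>
           infix_free (nfa_lang \<Sigma> N) \<and>
           min_dfa_states \<Sigma> (nfa_lang \<Sigma> N) = \<alpha>"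
proof -
  consider "n = 1" | "n = 2" | "3 \<le> n" using assms(1) by linarith
  then show ?thesis
  proof cases
    case 1
    have "real \<alpha> \<le> 1/2 + 2" using assms(3) pw1 unfolding 1 by simp
    then have "\<alpha> \<le> 2" by linarith
    then have "\<alpha> = 2" using assms(2) 1 by simp
    then show ?thesis using case1 1 by simp
  next
    case 2
    have "real \<alpha> \<le> 1 + 2" using assms(3) pw2 unfolding 2 by simp
    then have "\<alpha> \<le> 3" by linarith
    then have "\<alpha> = 3" using assms(2) 2 by simp
    then show ?thesis using case2 2 by simp
  next
    case 3
    have "real \<alpha> \<le> real (2 ^ (n - 2) + 2)" using assms(3) pw3[OF 3] by simp
    then have "\<alpha> \<le> 2 ^ (n - 2) + 2" by (simp only: of_nat_le_iff)
    then show ?thesis using case_ge3 3 assms(2) by blast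
  qed
qed

end
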